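(* Let $f:\mathbb{R}^d\to\mathbb{R}$ be $\beta$-smooth with a minimizer $w^\star$, and run AdaSGD (as defined in the context) for $T$ steps with parameters $\eta,\gamma>0$ using a stochastic gradient oracle with bounded affine noise with parameters $\sigma_0,\sigma_1\ge0$. Let $\bar d_t=\max_{s\le t}\|w_s-w^\star\|$ and $\bar d'_t=\max\{\bar d_t,\eta\}$. Then for any $\delta\in(0,1)$, with probability at least $1-\delta$, for all $t\le T$, $$\sum_{s=1}^t\hat\eta_s(\nabla f(w_s)-g_s)\cdot(w_s-w^\star)\le2\bar d'_t\sqrt{A_t\big(\tfrac{\delta}{\log(4T)}\big)\sum_{s\le t}\eta_{s-1}^2\|\nabla f(w_s)-g_s\|^2+\eta^2\Big(\frac{\sigma_0}{\gamma}+\sigma_1\Big)^2B_t\big(\tfrac{\delta}{\log(4T)}\big)},$$ where $A_t(\delta')=16\log\big(\frac{60\log(6t)}{\delta'}\big)$ and $B_t(\delta')=16\log^2\big(\frac{60\log(6t)}{\delta'}\big)$.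
   Context: $\|\cdot\|$ is the Euclidean norm and $\log$ the base-2 logarithm. $\beta$-smooth: $\|\nabla f(x)-\nabla f(y)\|\le\beta\|x-y\|$. Oracle: queried at $w$, returns random $g(w)$ with $\mathbb{E}[g(w)\mid w]=\nabla f(w)$ and, with probability one, $\|g(w)-\nabla f(w)\|^2\le\sigma_0^2+\sigma_1^2\|\nabla f(w)\|^2$. AdaSGD: arbitrary $w_1$; for $t=1,\dots,T$, $g_t=g(w_t)$ a fresh oracle answer ($\mathbb{E}[g_t\mid g_1,\dots,g_{t-1}]=\nabla f(w_t)$), $G_t=\sqrt{\gamma^2+\sum_{s=1}^t\|g_s\|^2}$ (so $G_0=\gamma$), $\eta_t=\eta/G_t$ (so $\eta_0=\eta/\gamma$), $w_{t+1}=w_t-\eta_tg_t$. Decorrelated step sizes: $\hat\eta_s=\eta/\sqrt{G_{s-1}^2+\|\nabla f(w_s)\|^2}$. *)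

theory Defs
  imports "HOL-Probability.Probability"
begin

definition smooth :: "real \<Rightarrow> ('a::euclidean_space \<Rightarrow> 'a) \<Rightarrow> bool" where
  "smooth \<beta> gradf \<longleftrightarrow> (\<forall>x y. norm (gradf x - gradf y) \<le> \<beta> * norm (x - y))"

definition adaG :: "real \<Rightarrow> (nat \<Rightarrow> 'w \<Rightarrow> 'a::real_normed_vector) \<Rightarrow> 'w \<Rightarrow> nat \<Rightarrow> real" where
  "adaG \<gamma> g \<omega> t = sqrt (\<gamma>\<^sup>2 + (\<Sum>s\<in>{1..t}. (norm (g s \<omega>))\<^sup>2))"

text \<open>AdaSGD iterates, paper indexing: adaW .. 1 = w_1, adaW .. (t+1) = w_t - (eta/G_t) g_t
  for t >= 1. The value at index 0 is a dummy (set to w_1) and never used.\<close>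
primrec adaW :: "'a::real_normed_vector \<Rightarrow> real \<Rightarrow> real \<Rightarrow> (nat \<Rightarrow> 'w \<Rightarrow> 'a) \<Rightarrow> 'w \<Rightarrow> nat \<Rightarrow> 'a" where
  "adaW w1 \<eta> \<gamma> g \<omega> 0 = w1"
| "adaW w1 \<eta> \<gamma> g \<omega> (Suc t) =
     (if t = 0 then w1 else adaW w1 \<eta> \<gamma> g \<omega> t - (\<eta> / adaG \<gamma> g \<omega> t) *\<^sub>R g t \<omega>)"

definition past :: "'w measure \<Rightarrow> (nat \<Rightarrow> 'w \<Rightarrow> 'a::topological_space) \<Rightarrow> nat \<Rightarrow> 'w measure" where
  "past M g t = sigma (space M) (\<Union>s\<in>{1..<t}. {g s -` A \<inter> space M | A. A \<in> sets borel})"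

definition hat_eta :: "real \<Rightarrow> real \<Rightarrow> ('a::euclidean_space \<Rightarrow> 'a) \<Rightarrow> 'a \<Rightarrow> (nat \<Rightarrow> 'w \<Rightarrow> 'a) \<Rightarrow> 'w \<Rightarrow> nat \<Rightarrow> real" where
  "hat_eta \<eta> \<gamma> gradf w1 g \<omega> s =
     \<eta> / sqrt ((adaG \<gamma> g \<omega> (s - 1))\<^sup>2 + (norm (gradf (adaW w1 \<eta> \<gamma> g \<omega> s)))\<^sup>2)"

definition A_fn :: "nat \<Rightarrow> real \<Rightarrow> real" where
  "A_fn t \<delta>' = 16 * log 2 (60 * log 2 (6 * real t) / \<delta>')"

definition B_fn :: "nat \<Rightarrow> real \<Rightarrow> real" where
  "B_fn t \<delta>' = 16 * (log 2 (60 * log 2 (6 * real t) / \<delta>'))\<^sup>2"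

end

theory Submission
  imports Defs
begin

lemma ln_lower_neg:
  fixes x :: real assumes "-(1/2) \<le> x" "x \<le> 0"
  shows "x - x\<^sup>2 \<le> ln (1 + x)"
proof -
  define h where "h = (\<lambda>x::real. ln (1 + x) - x + x\<^sup>2)"
  have "h 0 \<le> h x"
  proof (rule DERIV_nonpos_imp_nonincreasing[of x 0 h])
    show "x \<le> 0" by fact
    fix y assume y0: "x \<le> y" "y \<le> 0"
    then have y: "x \<le> y \<and> y \<le> 0" by simp
    then have y1: "1 + y > 0" using assms by linarith
    have "(h has_real_derivative (1/(1+y) - 1 + 2*y)) (at y)"
      unfolding h_def using y1
      by (auto intro!: derivative_eq_intros)
    moreover have "1/(1+y) - 1 + 2*y \<le> 0"
    proof -
      have "1/(1+y) - 1 + 2*y = y*(1+2*y)/(1+y)" using y1 by (simp add: field_simps)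
      also have "\<dots> \<le> 0" using y assms y1
        by (intro divide_nonpos_pos mult_nonpos_nonneg) auto
      finally show ?thesis .
    qed
    ultimately show "\<exists>d. (h has_real_derivative d) (at y) \<and> d \<le> 0" by blast
  qed
  then show ?thesis by (simp add: h_def)
qed

lemma exp_le_one_plus:
  fixes x :: real assumes "\<bar>x\<bar> \<le> 1/2"
  shows "exp (x - x\<^sup>2) \<le> 1 + x"
proof -
  have "x - x\<^sup>2 \<le> ln (1 + x)"
  proof (cases "x \<le> 0")
    case True then show ?thesis using ln_lower_neg assms by auto
  next
    case False
    then have "\<bar>ln (1 + x) - x\<bar> \<le> x\<^sup>2" using assms
      by (intro abs_ln_one_plus_x_minus_x_bound_nonneg) auto
    then show ?thesis by linarith
  qed
  then have "exp (x - x\<^sup>2) \<le> exp (ln (1 + x))" by simp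
  also have "\<dots> = 1 + x" using assms by simp
  finally show ?thesis .
qed


lemma core_ineq:
  fixes M :: "'w measure" and F :: "nat \<Rightarrow> 'w measure" and Z :: "nat \<Rightarrow> 'w \<Rightarrow> real"
  assumes P: "prob_space M"
  and sub: "\<And>r. subalgebra M (F r)"
  and Zmeas: "\<And>r s. 1 \<le> r \<Longrightarrow> r < s \<Longrightarrow> Z r \<in> borel_measurable (F s)"
  and Zbd: "\<And>r \<omega>. \<bar>Z r \<omega>\<bar> \<le> c"
  and mart: "\<And>r H B. r \<in> {1..T} \<Longrightarrow> H \<in> borel_measurable (F r) \<Longrightarrow> (\<And>\<omega>. \<bar>H \<omega>\<bar> \<le> B)
      \<Longrightarrow> (\<integral>\<omega>. H \<omega> * Z r \<omega> \<partial>M) = 0"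
  and lam: "0 < lam" "lam * c \<le> 1/2"
  shows "measure M {\<omega>\<in>space M. \<exists>s\<in>{1..T}. L \<le> lam * (\<Sum>r\<in>{1..s}. Z r \<omega>) - lam\<^sup>2 * (\<Sum>r\<in>{1..s}. (Z r \<omega>)\<^sup>2)}
         \<le> exp (-L)"
proof -
  interpret prob_space M by (rule P)
  have c0: "0 \<le> c" using Zbd[of 0 undefined] by linarith
  define Q where "Q s \<omega> = lam * (\<Sum>r\<in>{1..s}. Z r \<omega>) - lam\<^sup>2 * (\<Sum>r\<in>{1..s}. (Z r \<omega>)\<^sup>2)" for s \<omega>
  define e where "e r \<omega> = exp (lam * Z r \<omega> - (lam * Z r \<omega>)\<^sup>2)" for r \<omega>
  define C where "C s \<omega> = (\<exists>q\<in>{1..s}. L \<le> Q q \<omega>)" for s \<omega>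
  define N where "N s \<omega> = (\<Prod>r\<in>{1..s}. if C (r - 1) \<omega> then 1 else e r \<omega>)" for s \<omega>
  have QSuc: "Q (Suc s) \<omega> = Q s \<omega> + (lam * Z (Suc s) \<omega> - (lam * Z (Suc s) \<omega>)\<^sup>2)" for s \<omega>
    unfolding Q_def by (simp add: algebra_simps power_mult_distrib)
  have CSuc: "C (Suc s) \<omega> = (C s \<omega> \<or> L \<le> Q (Suc s) \<omega>)" for s \<omega>
    unfolding C_def by (auto simp: le_Suc_eq) (use atLeastAtMost_iff in force)
  have NSuc: "N (Suc s) \<omega> = N s \<omega> * (if C s \<omega> then 1 else e (Suc s) \<omega>)" for s \<omega>
    unfolding N_def by (simp add: prod.nat_ivl_Suc' mult.commute)
  have e_bd: "e r \<omega> \<le> 1 + lam * Z r \<omega>" for r \<omega>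
  proof -
    have "\<bar>lam * Z r \<omega>\<bar> \<le> lam * c" using Zbd[of r \<omega>] lam by (simp add: abs_mult mult_left_mono)
    then show ?thesis unfolding e_def using lam by (intro exp_le_one_plus) auto
  qed
  have e_pos: "0 \<le> e r \<omega>" for r \<omega> unfolding e_def by simp
  have e_le: "e r \<omega> \<le> 3/2" for r \<omega>
  proof -
    have "lam * Z r \<omega> \<le> lam * c" using Zbd[of r \<omega>] lam by (intro mult_left_mono) auto
    then show ?thesis using e_bd[of r \<omega>] lam by linarith
  qed
  have N_nonneg: "0 \<le> N s \<omega>" for s \<omega> unfolding N_def using e_pos by (auto intro!: prod_nonneg)
  have N_bd: "N s \<omega> \<le> (3/2)^s" for s \<omega>
  proof (induction s)
    case 0 then show ?case by (simp add: N_def)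
  next
    case (Suc s)
    have "(if C s \<omega> then 1 else e (Suc s) \<omega>) \<le> 3/2" using e_le by auto
    then have "N (Suc s) \<omega> \<le> N s \<omega> * (3/2)" unfolding NSuc using N_nonneg
      by (intro mult_left_mono) auto
    also have "\<dots> \<le> (3/2)^s * (3/2)" using Suc by simp
    finally show ?case by simp
  qed
  have Zm: "Z r \<in> borel_measurable (F s)" if "1 \<le> r" "r < s" for r s using Zmeas that .
  have Qm: "Q q \<in> borel_measurable (F s)" if "q < s" for q s
    unfolding Q_def using that by (intro borel_measurable_diff borel_measurable_sum borel_measurable_times borel_measurable_power borel_measurable_const) (auto intro: Zm)
  have Cm: "Measurable.pred (F s) (C q)" if "q < s" for q s
    unfolding C_def using that
    by (intro pred_intros_finite) (auto simp: Measurable.pred_def intro!: borel_measurable_le Qm)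
  have em: "e r \<in> borel_measurable (F s)" if "1 \<le> r" "r < s" for r s
    unfolding e_def using Zm[OF that] by measurable
  have Nm: "N q \<in> borel_measurable (F s)" if "q < s" for q s
    unfolding N_def using that
    by (intro borel_measurable_prod measurable_If) (auto intro!: em Cm[unfolded Measurable.pred_def])
  have NmM: "N q \<in> borel_measurable M" for q
    by (rule measurable_from_subalg[OF sub Nm[of q "Suc q"]]) simp
  have intN: "integrable M (N q)" for q
    using N_bd N_nonneg by (intro integrable_const_bound[where B="(3/2)^q"] NmM) auto
  have ZmM: "Z r \<in> borel_measurable M" if "1 \<le> r" for r
    by (rule measurable_from_subalg[OF sub Zm[of r "Suc r"]]) (use that in auto)
  have int_le: "(\<integral>\<omega>. N s \<omega> \<partial>M) \<le> 1" if "s \<le> T" for s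
    using that
  proof (induction s)
    case 0
    then show ?case by (simp add: N_def prob_space)
  next
    case (Suc s)
    define H where "H \<omega> = N s \<omega> * (if C s \<omega> then 0 else 1)" for \<omega>
    have Hm: "H \<in> borel_measurable (F (Suc s))" unfolding H_def
      using Nm[of s "Suc s"] Cm[of s "Suc s"]
      by (intro borel_measurable_times measurable_If) (auto simp: Measurable.pred_def)
    have Hbd: "\<bar>H \<omega>\<bar> \<le> (3/2)^s" for \<omega> unfolding H_def using N_bd N_nonneg by auto
    have HmM: "H \<in> borel_measurable M" by (rule measurable_from_subalg[OF sub Hm])
    have intHZ: "integrable M (\<lambda>\<omega>. H \<omega> * Z (Suc s) \<omega>)"
    proof (rule integrable_const_bound[where B="(3/2)^s * c"])
      show "AE \<omega> in M. norm (H \<omega> * Z (Suc s) \<omega>) \<le> (3/2)^s * c"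
        using Hbd Zbd by (auto simp: abs_mult intro!: mult_mono)
      show "(\<lambda>\<omega>. H \<omega> * Z (Suc s) \<omega>) \<in> borel_measurable M"
        using HmM ZmM[of "Suc s"] by simp
    qed
    have mz: "(\<integral>\<omega>. H \<omega> * Z (Suc s) \<omega> \<partial>M) = 0"
      using Suc.prems by (intro mart[OF _ Hm Hbd]) auto
    have pw: "N (Suc s) \<omega> \<le> N s \<omega> + lam * (H \<omega> * Z (Suc s) \<omega>)" for \<omega>
    proof (cases "C s \<omega>")
      case True then show ?thesis by (simp add: NSuc H_def)
    next
      case False
      have "N s \<omega> * e (Suc s) \<omega> \<le> N s \<omega> * (1 + lam * Z (Suc s) \<omega>)"
        using e_bd N_nonneg by (intro mult_left_mono) auto
      then show ?thesis using False by (simp add: NSuc H_def algebra_simps)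
    qed
    have "(\<integral>\<omega>. N (Suc s) \<omega> \<partial>M) \<le> (\<integral>\<omega>. N s \<omega> + lam * (H \<omega> * Z (Suc s) \<omega>) \<partial>M)"
      using intN intHZ pw by (intro integral_mono) auto
    also have "\<dots> = (\<integral>\<omega>. N s \<omega> \<partial>M) + lam * (\<integral>\<omega>. H \<omega> * Z (Suc s) \<omega> \<partial>M)"
      using intN intHZ by simp
    also have "\<dots> \<le> 1" using mz Suc by simp
    finally show ?case .
  qed
  have pw2: "(\<not> C s \<omega> \<longrightarrow> N s \<omega> = exp (Q s \<omega>)) \<and> (C s \<omega> \<longrightarrow> exp L \<le> N s \<omega>)" for s \<omega>
  proof (induction s)
    case 0
    then show ?case by (simp add: N_def C_def Q_def)
  next
    case (Suc s)
    show ?case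
    proof (cases "C s \<omega>")
      case True
      then show ?thesis using Suc by (simp add: NSuc CSuc)
    next
      case False
      then have "N (Suc s) \<omega> = exp (Q (Suc s) \<omega>)"
        using Suc by (simp add: NSuc QSuc e_def exp_add)
      then show ?thesis using False by (simp add: CSuc)
    qed
  qed
  have sub1: "{\<omega>\<in>space M. \<exists>s\<in>{1..T}. L \<le> lam * (\<Sum>r\<in>{1..s}. Z r \<omega>) - lam\<^sup>2 * (\<Sum>r\<in>{1..s}. (Z r \<omega>)\<^sup>2)}
     \<subseteq> {\<omega>\<in>space M. exp L \<le> N T \<omega>}"
  proof safe
    fix \<omega> s assume "\<omega> \<in> space M" "s \<in> {1..T}" "L \<le> lam * (\<Sum>r\<in>{1..s}. Z r \<omega>) - lam\<^sup>2 * (\<Sum>r\<in>{1..s}. (Z r \<omega>)\<^sup>2)"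
    then have "C T \<omega>" unfolding C_def Q_def by blast
    then show "exp L \<le> N T \<omega>" using pw2 by blast
  qed
  have "measure M {\<omega>\<in>space M. \<exists>s\<in>{1..T}. L \<le> lam * (\<Sum>r\<in>{1..s}. Z r \<omega>) - lam\<^sup>2 * (\<Sum>r\<in>{1..s}. (Z r \<omega>)\<^sup>2)}
     \<le> measure M {\<omega>\<in>space M. exp L \<le> N T \<omega>}"
    using sub1 NmM[of T] by (intro finite_measure_mono) measurable
  also have "\<dots> \<le> (\<integral>\<omega>. N T \<omega> \<partial>M) / exp L"
    using intN[of T] N_nonneg NmM[of T] by (intro integral_Markov_inequality_measure[where A="space M"]) auto
  also have "\<dots> \<le> 1 / exp L" using int_le[of T] by (intro divide_right_mono) auto
  finally show ?thesis by (simp add: exp_minus field_simps)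
qed

lemma ex_pow2_ivl:
  fixes x :: real assumes "1 \<le> x"
  shows "\<exists>k::nat. 2^k \<le> x \<and> x < 2^(Suc k)"
proof -
  obtain n :: nat where n: "x < 2^n" using real_arch_pow[of 2 x] by auto
  define m where "m = (LEAST n::nat. x < 2^n)"
  have m: "x < 2^m" unfolding m_def by (rule LeastI[of _ n]) (rule n)
  have m0: "m \<noteq> 0" using m assms by (cases m) auto
  then obtain k where k: "m = Suc k" by (cases m) auto
  have "k < m" using k by simp
  then have "\<not> x < 2^k" unfolding m_def by (rule not_less_Least)
  then show ?thesis using m k by (intro exI[of _ k]) auto
qed

lemma grid_choice:
  fixes L c W :: real and T :: nat
  assumes L: "1 \<le> L" and c: "0 < c" and W: "0 \<le> W" "W \<le> real T * c\<^sup>2" and T: "1 \<le> T"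
  shows "\<exists>k::nat. 4^k < 4 * real T \<and>
     L * (2*c*2^k) + W / (2*c*2^k) \<le> max (4*c*L) (3 * sqrt (L*W))"
proof (cases "W \<le> 4 * c\<^sup>2 * L")
  case True
  have "W / (2*c) \<le> 2*c*L" using True c by (simp add: field_simps power2_eq_square)
  moreover have "L*(2*c) = 2*c*L" by simp
  ultimately have "L * (2*c) + W / (2*c) \<le> 4*c*L" by linarith
  moreover have "L * (2*c*2^(0::nat)) + W / (2*c*2^(0::nat)) = L*(2*c) + W/(2*c)" by simp
  ultimately have "L * (2*c*2^(0::nat)) + W / (2*c*2^(0::nat)) \<le> max (4*c*L) (3 * sqrt (L*W))"
    by (metis max.coboundedI1)
  moreover have "(4::real)^(0::nat) < 4 * real T" using T by simp
  ultimately show ?thesis by (intro exI[of _ 0] conjI)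
next
  case False
  define u where "u = sqrt L"
  define v where "v = sqrt W"
  have u: "0 < u" "L = u\<^sup>2" using L by (auto simp: u_def)
  have v: "0 \<le> v" "W = v\<^sup>2" using W by (auto simp: v_def)
  have sLW: "sqrt (L * W) = u * v" by (simp add: real_sqrt_mult u_def v_def)
  define x where "x = v / (2*c*u)"
  have "(2*c*u)\<^sup>2 < v\<^sup>2" using False u v by (simp add: power_mult_distrib)
  then have "2*c*u < v" using v(1) by (rule power_less_imp_less_base)
  then have x1: "1 \<le> x" unfolding x_def using u c by simp
  obtain k where k: "2^k \<le> x" "x < 2^Suc k" using ex_pow2_ivl[OF x1] by auto
  define a :: real where "a = 2^k"
  have a0: "0 < a" by (simp add: a_def)
  have "L * (2*c*a) \<le> u\<^sup>2 * (2*c*x)" using k u c by (simp add: a_def)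
  also have "\<dots> = u* v" using u c by (simp add: x_def field_simps power2_eq_square)
  finally have t1: "L * (2*c*a) \<le> u* v" .
  have "x < 2*a" using k by (simp add: a_def)
  then have "v / (2*c*u) < 2 * a" by (simp add: x_def)
  then have "v < 4*c*u*a" using u c by (simp add: field_simps)
  then have "v\<^sup>2 \<le> 4*c*u*a * v" using v by (simp add: power2_eq_square mult_right_mono)
  then have t2: "W / (2*c*a) \<le> 2*u* v" using v u c a0 by (simp add: field_simps)
  have "a\<^sup>2 \<le> x\<^sup>2" using k a0 by (simp add: a_def power_mono)
  also have "x\<^sup>2 = W / (4*c\<^sup>2*L)" using u v c by (simp add: x_def field_simps power2_eq_square)
  also have "\<dots> \<le> real T * c\<^sup>2 / (4*c\<^sup>2*1)" using W L c
    by (intro frac_le) auto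
  also have "\<dots> = real T / 4" using c by simp
  finally have "a\<^sup>2 \<le> real T / 4" .
  moreover have "a\<^sup>2 = 4^k" unfolding a_def power2_eq_square
    by (simp add: power_mult_distrib[symmetric])
  ultimately have "(4::real)^k \<le> real T / 4" by simp
  then have "4^k < 4 * real T" using T by simp
  moreover have "L * (2*c*2^k) + W / (2*c*2^k) \<le> 3 * sqrt (L * W)"
    using t1 t2 sLW unfolding a_def by linarith
  then have "L * (2*c*2^k) + W / (2*c*2^k) \<le> max (4*c*L) (3 * sqrt (L * W))"
    by (rule max.coboundedI2)
  ultimately show ?thesis by (intro exI[of _ k] conjI)
qed

lemma past_gen_sub:
  fixes g :: "nat \<Rightarrow> 'w \<Rightarrow> 'a::topological_space" and M :: "'w measure"
  assumes meas: "\<And>s. g s \<in> borel_measurable M"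
  shows "(\<Union>s\<in>{1..<t}. {g s -` A \<inter> space M | A. A \<in> sets borel}) \<subseteq> sets M"
  using meas by (auto intro!: measurable_sets)

lemma past_space:
  "space (past M g t) = space M"
  unfolding past_def by (rule space_measure_of_conv)

lemma past_sets:
  fixes g :: "nat \<Rightarrow> 'w \<Rightarrow> 'a::topological_space" and M :: "'w measure"
  assumes meas: "\<And>s. g s \<in> borel_measurable M"
  shows "sets (past M g t) = sigma_sets (space M) (\<Union>s\<in>{1..<t}. {g s -` A \<inter> space M | A. A \<in> sets borel})"
  unfolding past_def
  by (rule sets_measure_of) (auto)

lemma past_subalg:
  fixes g :: "nat \<Rightarrow> 'w \<Rightarrow> 'a::topological_space" and M :: "'w measure"
  assumes meas: "\<And>s. g s \<in> borel_measurable M"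
  shows "subalgebra M (past M g t)"
  unfolding subalgebra_def
  using past_space[of M g t] past_sets[OF meas, where t=t] sets.sigma_sets_subset[OF past_gen_sub[OF meas, where t=t]]
  by auto

lemma g_meas_past:
  fixes g :: "nat \<Rightarrow> 'w \<Rightarrow> 'a::topological_space" and M :: "'w measure"
  assumes meas: "\<And>s. g s \<in> borel_measurable M" and "1 \<le> s" "s < t"
  shows "g s \<in> borel_measurable (past M g t)"
proof (rule measurableI)
  fix A assume "A \<in> sets (borel :: 'a measure)"
  then have "g s -` A \<inter> space M \<in> (\<Union>s\<in>{1..<t}. {g s -` A \<inter> space M | A. A \<in> sets borel})"
    using assms by (intro UN_I[of s]) auto
  then show "g s -` A \<inter> space (past M g t) \<in> sets (past M g t)"
    unfolding past_space past_sets[OF meas] by (rule sigma_sets.Basic)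
qed auto

lemma adaG_meas_past:
  fixes g :: "nat \<Rightarrow> 'w \<Rightarrow> 'a::euclidean_space" and M :: "'w measure"
  assumes meas: "\<And>s. g s \<in> borel_measurable M" and "s < t"
  shows "(\<lambda>\<omega>. adaG \<gamma> g \<omega> s) \<in> borel_measurable (past M g t)"
proof -
  have "(\<lambda>\<omega>. (norm (g r \<omega>))\<^sup>2) \<in> borel_measurable (past M g t)" if "r \<in> {1..s}" for r
  proof -
    have "g r \<in> borel_measurable (past M g t)" using that assms by (intro g_meas_past) auto
    then show ?thesis by measurable
  qed
  then have "(\<lambda>\<omega>. \<Sum>r\<in>{1..s}. (norm (g r \<omega>))\<^sup>2) \<in> borel_measurable (past M g t)"
    by (rule borel_measurable_sum)
  then show ?thesis unfolding adaG_def by measurable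
qed

lemma adaW_meas_past:
  fixes g :: "nat \<Rightarrow> 'w \<Rightarrow> 'a::euclidean_space" and M :: "'w measure"
  assumes meas: "\<And>s. g s \<in> borel_measurable M" and "s \<le> t"
  shows "(\<lambda>\<omega>. adaW w1 \<eta> \<gamma> g \<omega> s) \<in> borel_measurable (past M g t)"
  using assms(2)
proof (induction s)
  case 0 then show ?case by simp
next
  case (Suc s)
  show ?case
  proof (cases "s = 0")
    case True then show ?thesis by simp
  next
    case False
    have "(\<lambda>\<omega>. adaW w1 \<eta> \<gamma> g \<omega> s - (\<eta> / adaG \<gamma> g \<omega> s) *\<^sub>R g s \<omega>) \<in> borel_measurable (past M g t)"
    proof -
      have [measurable]: "g s \<in> borel_measurable (past M g t)" using Suc False by (intro g_meas_past meas) auto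
      have [measurable]: "(\<lambda>\<omega>. adaG \<gamma> g \<omega> s) \<in> borel_measurable (past M g t)" using Suc by (intro adaG_meas_past meas) auto
      have [measurable]: "(\<lambda>\<omega>. adaW w1 \<eta> \<gamma> g \<omega> s) \<in> borel_measurable (past M g t)" using Suc by simp
      show ?thesis by (intro borel_measurable_diff borel_measurable_scaleR borel_measurable_divide) simp_all
    qed
    then show ?thesis using False by simp
  qed
qed

lemma gradf_cont:
  fixes gradf :: "'a::euclidean_space \<Rightarrow> 'a"
  assumes "smooth \<beta> gradf"
  shows "gradf \<in> borel_measurable borel"
proof -
  have "continuous_on UNIV gradf"
  proof (rule lipschitz_on_continuous_on)
    have "norm (gradf x - gradf y) \<le> \<bar>\<beta>\<bar> * norm (x - y)" for x y
      using assms unfolding smooth_def by (smt (verit) abs_ge_self mult_right_mono norm_ge_zero)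
    then show "\<bar>\<beta>\<bar>-lipschitz_on UNIV gradf"
      by (intro lipschitz_onI) (auto simp: dist_norm)
  qed
  then show ?thesis by (rule borel_measurable_continuous_onI)
qed


lemma abel_aux:
  fixes D z :: "nat \<Rightarrow> real"
  assumes mono: "\<And>s. 1 \<le> s \<Longrightarrow> s < t \<Longrightarrow> D s \<le> D (Suc s)"
  and bd: "\<And>s. s \<in> {1..t} \<Longrightarrow> \<bar>\<Sum>r\<in>{1..s}. z r\<bar> \<le> R"
  shows "Suc k \<le> t \<Longrightarrow> (\<Sum>s\<in>{1..Suc k}. D s * z s) \<le> D (Suc k) * (\<Sum>r\<in>{1..Suc k}. z r) + (D (Suc k) - D 1) * R"
proof (induction k)
  case 0 then show ?case by simp
next
  case (Suc k)
  define S where "S = (\<Sum>r\<in>{1..Suc k}. z r)"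
  have IH: "(\<Sum>s\<in>{1..Suc k}. D s * z s) \<le> D (Suc k) * S + (D (Suc k) - D 1) * R"
    using Suc by (simp add: S_def)
  have Sb: "- S \<le> R" using bd[of "Suc k"] Suc.prems by (simp add: S_def)
  have Dm: "0 \<le> D (Suc (Suc k)) - D (Suc k)" using mono[of "Suc k"] Suc.prems by simp
  have "(D (Suc (Suc k)) - D (Suc k)) * (- S) \<le> (D (Suc (Suc k)) - D (Suc k)) * R"
    using Sb Dm by (rule mult_left_mono)
  moreover have "(\<Sum>s\<in>{1..Suc (Suc k)}. D s * z s) = (\<Sum>s\<in>{1..Suc k}. D s * z s) + D (Suc (Suc k)) * z (Suc (Suc k))"
    by (simp add: sum.nat_ivl_Suc')
  moreover have "(\<Sum>r\<in>{1..Suc (Suc k)}. z r) = S + z (Suc (Suc k))"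
    by (simp add: sum.nat_ivl_Suc' S_def)
  ultimately show ?case using IH by (simp add: algebra_simps)
qed

lemma abel:
  fixes D z :: "nat \<Rightarrow> real"
  assumes mono: "\<And>s. 1 \<le> s \<Longrightarrow> s < t \<Longrightarrow> D s \<le> D (Suc s)"
  and pos: "0 \<le> D 1" and t: "1 \<le> t"
  and bd: "\<And>s. s \<in> {1..t} \<Longrightarrow> \<bar>\<Sum>r\<in>{1..s}. z r\<bar> \<le> R"
  shows "(\<Sum>s\<in>{1..t}. D s * z s) \<le> 2 * D t * R"
proof -
  obtain k where k: "t = Suc k" using t by (cases t) auto
  have Dt: "D 1 \<le> D t"
  proof -
    have "D 1 \<le> D (Suc j)" if "Suc j \<le> t" for j using that
    proof (induction j)
      case (Suc j) then show ?case using mono[of "Suc j"] by simp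
    qed simp
    then show ?thesis using k by simp
  qed
  have R0: "0 \<le> R" using bd[of t] t by auto
  have S: "(\<Sum>r\<in>{1..t}. z r) \<le> R" using bd[of t] t by auto
  have "(\<Sum>s\<in>{1..t}. D s * z s) \<le> D t * (\<Sum>r\<in>{1..t}. z r) + (D t - D 1) * R"
    using abel_aux[of t D z R k] mono bd k by simp
  also have "\<dots> \<le> D t * R + D t * R"
    using S Dt pos R0 by (intro add_mono mult_left_mono mult_right_mono) auto
  finally show ?thesis by (simp add: algebra_simps)
qed

lemma adaG_pos:
  assumes "\<gamma> > 0" shows "adaG \<gamma> g \<omega> s \<ge> \<gamma>"
proof -
  have "\<gamma>\<^sup>2 \<le> \<gamma>\<^sup>2 + (\<Sum>s\<in>{1..s}. (norm (g s \<omega>))\<^sup>2)" by (simp add: sum_nonneg)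
  then have "sqrt (\<gamma>\<^sup>2) \<le> adaG \<gamma> g \<omega> s" unfolding adaG_def by (rule real_sqrt_le_mono)
  then show ?thesis using assms by simp
qed

lemma adaG_ge_g:
  assumes "1 \<le> s" shows "norm (g s \<omega>) \<le> adaG \<gamma> g \<omega> s"
proof -
  have "(norm (g s \<omega>))\<^sup>2 \<le> (\<Sum>r\<in>{1..s}. (norm (g r \<omega>))\<^sup>2)"
    using assms by (intro member_le_sum) auto
  then have "(norm (g s \<omega>))\<^sup>2 \<le> \<gamma>\<^sup>2 + (\<Sum>r\<in>{1..s}. (norm (g r \<omega>))\<^sup>2)" by (smt (verit) zero_le_power2)
  then have "sqrt ((norm (g s \<omega>))\<^sup>2) \<le> adaG \<gamma> g \<omega> s" unfolding adaG_def by (rule real_sqrt_le_mono)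
  then show ?thesis by simp
qed

lemma adaG_mono:
  "adaG \<gamma> g \<omega> s \<le> adaG \<gamma> g \<omega> (Suc s)"
  unfolding adaG_def by (intro real_sqrt_le_mono) (simp add: sum.nat_ivl_Suc')

lemma adaW_step:
  assumes "\<eta> > 0" "\<gamma> > 0"
  shows "norm (adaW w1 \<eta> \<gamma> g \<omega> s - w1) \<le> real s * \<eta>"
proof (induction s)
  case 0 then show ?case by simp
next
  case (Suc s)
  show ?case
  proof (cases "s = 0")
    case True then show ?thesis using assms by simp
  next
    case False
    have G: "norm (g s \<omega>) \<le> adaG \<gamma> g \<omega> s" using False by (intro adaG_ge_g) simp
    have Gp: "adaG \<gamma> g \<omega> s > 0" using adaG_pos[of \<gamma> g \<omega> s] assms by simp
    have "norm ((\<eta> / adaG \<gamma> g \<omega> s) *\<^sub>R g s \<omega>) = \<eta> / adaG \<gamma> g \<omega> s * norm (g s \<omega>)"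
      using assms Gp by simp
    also have "\<dots> \<le> \<eta> / adaG \<gamma> g \<omega> s * adaG \<gamma> g \<omega> s"
      using G assms Gp by (intro mult_left_mono) auto
    also have "\<dots> = \<eta>" using Gp by simp
    finally have st: "norm ((\<eta> / adaG \<gamma> g \<omega> s) *\<^sub>R g s \<omega>) \<le> \<eta>" .
    have "norm (adaW w1 \<eta> \<gamma> g \<omega> (Suc s) - w1) = norm ((adaW w1 \<eta> \<gamma> g \<omega> s - w1) - (\<eta> / adaG \<gamma> g \<omega> s) *\<^sub>R g s \<omega>)"
      using False by (simp add: algebra_simps)
    also have "\<dots> \<le> norm (adaW w1 \<eta> \<gamma> g \<omega> s - w1) + norm ((\<eta> / adaG \<gamma> g \<omega> s) *\<^sub>R g s \<omega>)"
      by (rule norm_triangle_ineq4)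
    also have "\<dots> \<le> real s * \<eta> + \<eta>" using Suc st by linarith
    finally show ?thesis by (simp add: algebra_simps)
  qed
qed


lemma he_bound:
  fixes \<eta> \<gamma> G a n \<sigma>0 \<sigma>1 :: real
  assumes "\<eta> > 0" "\<gamma> > 0" "G \<ge> \<gamma>" "a \<ge> 0" "n \<ge> 0" "n\<^sup>2 \<le> \<sigma>0\<^sup>2 + \<sigma>1\<^sup>2 * a\<^sup>2" "\<sigma>0 \<ge> 0" "\<sigma>1 \<ge> 0"
  shows "\<eta> / sqrt (G\<^sup>2 + a\<^sup>2) * n \<le> \<eta> * (\<sigma>0 / \<gamma> + \<sigma>1)"
proof -
  define q where "q = sqrt (G\<^sup>2 + a\<^sup>2)"
  have qG: "G \<le> q" unfolding q_def using real_sqrt_le_mono[of "G\<^sup>2" "G\<^sup>2 + a\<^sup>2"] assms by simp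
  have qa: "a \<le> q" unfolding q_def using real_sqrt_le_mono[of "a\<^sup>2" "G\<^sup>2 + a\<^sup>2"] assms by simp
  have q0: "q > 0" using qG assms by linarith
  have "0 \<le> 2*\<sigma>0*(\<sigma>1*a)" using assms by simp
  then have "\<sigma>0\<^sup>2 + \<sigma>1\<^sup>2 * a\<^sup>2 \<le> (\<sigma>0 + \<sigma>1 * a)\<^sup>2" by (simp add: power2_sum power_mult_distrib)
  then have "n\<^sup>2 \<le> (\<sigma>0 + \<sigma>1 * a)\<^sup>2" using assms(6) by linarith
  then have nb: "n \<le> \<sigma>0 + \<sigma>1 * a" by (rule power2_le_imp_le) (use assms in simp)
  have "n / q \<le> (\<sigma>0 + \<sigma>1 * a) / q" using nb q0 by (intro divide_right_mono) auto
  also have "\<dots> = \<sigma>0 / q + \<sigma>1 * (a / q)" by (simp add: add_divide_distrib)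
  also have "\<dots> \<le> \<sigma>0 / \<gamma> + \<sigma>1 * 1"
  proof (intro add_mono mult_left_mono)
    show "\<sigma>0 / q \<le> \<sigma>0 / \<gamma>" using assms qG by (intro divide_left_mono) auto
    show "a / q \<le> 1" using qa q0 by simp
  qed (use assms in auto)
  finally have "n / q \<le> \<sigma>0 / \<gamma> + \<sigma>1" by simp
  then have "\<eta> * (n / q) \<le> \<eta> * (\<sigma>0 / \<gamma> + \<sigma>1)" using assms by (intro mult_left_mono) auto
  then show ?thesis by (simp add: q_def)
qed

lemma final_real:
  fixes c L l W Y :: real
  assumes "0 < c" "1 \<le> L" "L \<le> l" "0 \<le> W" "W \<le> Y"
  shows "max (4*c*L) (3 * sqrt (L*W)) \<le> sqrt (16*l * Y + c\<^sup>2 * (16 * l\<^sup>2))"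
proof -
  have l0: "0 \<le> l" using assms by linarith
  have lY: "0 \<le> 16 * l * Y" using l0 assms by simp
  have "4*c*L \<le> 4*c*l" using assms by simp
  also have "\<dots> = sqrt (c\<^sup>2 * (16 * l\<^sup>2))" using assms l0
    by (simp add: real_sqrt_mult power_mult_distrib real_sqrt_abs)
  also have "\<dots> \<le> sqrt (16*l * Y + c\<^sup>2 * (16 * l\<^sup>2))" using lY by (intro real_sqrt_le_mono) simp
  finally have 1: "4*c*L \<le> sqrt (16*l * Y + c\<^sup>2 * (16 * l\<^sup>2))" .
  have "3 * sqrt (L*W) \<le> 4 * sqrt (l * Y)"
  proof -
    have "sqrt (L*W) \<le> sqrt (l * Y)" using assms by (intro real_sqrt_le_mono mult_mono) auto
    moreover have "0 \<le> sqrt (L*W)" using assms by simp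
    ultimately show ?thesis by linarith
  qed
  also have "\<dots> = sqrt (16 * l * Y)" by (simp add: real_sqrt_mult)
  also have "\<dots> \<le> sqrt (16*l * Y + c\<^sup>2 * (16 * l\<^sup>2))" by (intro real_sqrt_le_mono) simp
  finally show ?thesis using 1 by simp
qed

lemma L_le:
  fixes t T :: nat and \<delta> :: real
  assumes "1 \<le> t" "1 \<le> T" "0 < \<delta>" "\<delta> < 1"
  shows "ln (60 * log 2 (4 * real T) / \<delta>) \<le> log 2 (60 * log 2 (6 * real t) / (\<delta> / log 2 (4 * real T)))"
proof -
  have lT: "1 \<le> log 2 (4 * real T)" using assms by (subst le_log_iff) auto
  have lt: "1 \<le> log 2 (6 * real t)" using assms by (subst le_log_iff) auto
  define X where "X = 60 * log 2 (6 * real t) / (\<delta> / log 2 (4 * real T))"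
  have X: "X = 60 * log 2 (4 * real T) / \<delta> * log 2 (6 * real t)" unfolding X_def by (simp add: field_simps)
  have Y0: "0 < 60 * log 2 (4 * real T) / \<delta>" using lT assms by simp
  have "\<delta> \<le> 60 * log 2 (4 * real T)" using lT assms by linarith
  then have Y1: "1 \<le> 60 * log 2 (4 * real T) / \<delta>" using assms by (simp add: le_divide_eq)
  have YX: "60 * log 2 (4 * real T) / \<delta> \<le> X" unfolding X using Y0 lt
    by (metis mult.right_neutral mult_left_mono order_less_imp_le)
  have "ln (60 * log 2 (4 * real T) / \<delta>) \<le> ln X" using Y0 YX by simp
  also have "\<dots> \<le> log 2 X"
  proof -
    have "0 \<le> ln X" using Y1 YX by simp
    moreover have "0 < ln (2::real)" "ln (2::real) \<le> 1" using ln_2_less_1 by auto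
    ultimately have "ln X \<le> ln X / ln 2" by (simp add: le_divide_eq mult_left_le)
    then show ?thesis by (simp add: log_def)
  qed
  finally show ?thesis by (simp add: X_def)
qed

lemma L_ge1:
  fixes T :: nat and \<delta> :: real
  assumes "1 \<le> T" "0 < \<delta>" "\<delta> < 1"
  shows "1 \<le> ln (60 * log 2 (4 * real T) / \<delta>)"
proof -
  have lT: "2 \<le> log 2 (4 * real T)"
  proof -
    have "log 2 4 \<le> log 2 (4 * real T)" using assms by simp
    moreover have "log 2 (4::real) = 2" by (simp add: log_def ln_realpow[of 2 2, simplified])
    ultimately show ?thesis by simp
  qed
  have "3 \<le> 60 * log 2 (4 * real T)" using lT by simp
  also have "\<dots> \<le> 60 * log 2 (4 * real T) / \<delta>" using assms lT by (simp add: le_divide_eq mult_left_le)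
  finally have "3 \<le> 60 * log 2 (4 * real T) / \<delta>" .
  moreover have "exp 1 \<le> (3::real)" using exp_le by simp
  ultimately have "exp 1 \<le> 60 * log 2 (4 * real T) / \<delta>" by simp
  moreover have "0 < 60 * log 2 (4 * real T) / \<delta>" using lT assms by simp
  ultimately show ?thesis using ln_ge_iff by blast
qed

lemma card_Kset:
  fixes T :: nat assumes "1 \<le> T"
  shows "finite {k::nat. 4^k < 4 * real T}" "real (card {k::nat. 4^k < 4 * real T}) \<le> 2 * log 2 (4 * real T)"
proof -
  define n where "n = nat \<lceil>log 2 (4 * real T)\<rceil>"
  have sub: "{k::nat. 4^k < 4 * real T} \<subseteq> {..<n}"
  proof
    fix k assume "k \<in> {k::nat. 4^k < 4 * real T}"
    then have k: "(4::real)^k < 4 * real T" by simp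
    have "(2::real)^k \<le> 4^k" by (intro power_mono) auto
    with k have "(2::real)^k < 4 * real T" by simp
    then have "log 2 ((2::real)^k) < log 2 (4 * real T)" using assms by (subst log_less_cancel_iff) auto
    then have "real k < log 2 (4 * real T)" by simp
    then have "int k < \<lceil>log 2 (4 * real T)\<rceil>" by (simp add: less_ceiling_iff)
    then show "k \<in> {..<n}" unfolding n_def by (simp add: zless_nat_eq_int_zless)
  qed
  show "finite {k::nat. 4^k < 4 * real T}" using sub finite_subset by blast
  have "card {k::nat. 4^k < 4 * real T} \<le> n" using card_mono[OF _ sub] by simp
  then have "real (card {k::nat. 4^k < 4 * real T}) \<le> real n" by simp
  also have "\<dots> \<le> log 2 (4 * real T) + 1"
  proof -
    have l0: "0 \<le> log 2 (4 * real T)" using assms by simp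
    then have "0 \<le> \<lceil>log 2 (4 * real T)\<rceil>" by simp
    then have "real n = real_of_int \<lceil>log 2 (4 * real T)\<rceil>" unfolding n_def by simp
    then show ?thesis using ceiling_correct[of "log 2 (4 * real T)"] by linarith
  qed
  also have "\<dots> \<le> 2 * log 2 (4 * real T)" using assms by simp
  finally show "real (card {k::nat. 4^k < 4 * real T}) \<le> 2 * log 2 (4 * real T)" .
qed


lemma noise_lin:
  fixes n a p0 p1 :: real
  assumes "0 \<le> n" "0 \<le> a" "0 \<le> p0" "0 \<le> p1" "n\<^sup>2 \<le> p0\<^sup>2 + p1\<^sup>2 * a\<^sup>2"
  shows "n \<le> p0 + p1 * a"
proof -
  have "0 \<le> 2*p0*(p1*a)" using assms by simp
  then have "p0\<^sup>2 + p1\<^sup>2 * a\<^sup>2 \<le> (p0 + p1 * a)\<^sup>2" by (simp add: power2_sum power_mult_distrib)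
  then have "n\<^sup>2 \<le> (p0 + p1 * a)\<^sup>2" using assms(5) by linarith
  then show ?thesis by (rule power2_le_imp_le) (use assms in simp)
qed

lemma ex_set_meas:
  fixes f :: "nat \<Rightarrow> 'w \<Rightarrow> real"
  assumes "\<And>s. s \<in> S \<Longrightarrow> f s \<in> borel_measurable M" "finite S"
  shows "{\<omega>\<in>space M. \<exists>s\<in>S. L \<le> f s \<omega>} \<in> sets M"
proof -
  have "{\<omega>\<in>space M. \<exists>s\<in>S. L \<le> f s \<omega>} = (\<Union>s\<in>S. {\<omega>\<in>space M. L \<le> f s \<omega>})" by auto
  also have "\<dots> \<in> sets M"
  proof (rule sets.finite_UN)
    fix s assume "s \<in> S"
    then have [measurable]: "f s \<in> borel_measurable M" using assms by auto
    show "{\<omega>\<in>space M. L \<le> f s \<omega>} \<in> sets M" by measurable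
  qed (use assms in auto)
  finally show ?thesis .
qed

lemma all_set_meas:
  fixes f h :: "nat \<Rightarrow> 'w \<Rightarrow> real"
  assumes "\<And>s. s \<in> S \<Longrightarrow> f s \<in> borel_measurable M" "\<And>s. s \<in> S \<Longrightarrow> h s \<in> borel_measurable M" "finite S"
  shows "{\<omega>\<in>space M. \<forall>s\<in>S. f s \<omega> \<le> h s \<omega>} \<in> sets M"
proof -
  have "{\<omega>\<in>space M. \<forall>s\<in>S. f s \<omega> \<le> h s \<omega>} = space M - (\<Union>s\<in>S. {\<omega>\<in>space M. h s \<omega> < f s \<omega>})" by auto
  also have "\<dots> \<in> sets M"
  proof (intro sets.Diff sets.top sets.finite_UN)
    fix s assume "s \<in> S"
    then have [measurable]: "f s \<in> borel_measurable M" "h s \<in> borel_measurable M" using assms by auto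
    show "{\<omega>\<in>space M. h s \<omega> < f s \<omega>} \<in> sets M" by measurable
  qed (use assms in auto)
  finally show ?thesis .
qed


theorem lemma15:
  fixes M :: "'w measure"
    and f :: "'a::euclidean_space \<Rightarrow> real" and gradf :: "'a \<Rightarrow> 'a"
    and g :: "nat \<Rightarrow> 'w \<Rightarrow> 'a"
    and w1 wstar :: 'a
    and \<beta> \<eta> \<gamma> \<sigma>0 \<sigma>1 \<delta> :: real and T :: nat
  assumes "prob_space M"
    and grad: "\<And>x. (f has_derivative (\<lambda>h. gradf x \<bullet> h)) (at x)"
    and "smooth \<beta> gradf"
    and minimizer: "\<And>w. f wstar \<le> f w"
    and "\<eta> > 0" and "\<gamma> > 0" and "\<sigma>0 \<ge> 0" and "\<sigma>1 \<ge> 0"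
    and meas: "\<And>s. g s \<in> borel_measurable M"
    and unbiased: "\<And>t v. t \<in> {1..T} \<Longrightarrow>
       AE \<omega> in M. real_cond_exp M (past M g t) (\<lambda>\<omega>. g t \<omega> \<bullet> v) \<omega>
                    = gradf (adaW w1 \<eta> \<gamma> g \<omega> t) \<bullet> v"
    and noise: "\<And>t. t \<in> {1..T} \<Longrightarrow>
       AE \<omega> in M. (norm (g t \<omega> - gradf (adaW w1 \<eta> \<gamma> g \<omega> t)))\<^sup>2
                    \<le> \<sigma>0\<^sup>2 + \<sigma>1\<^sup>2 * (norm (gradf (adaW w1 \<eta> \<gamma> g \<omega> t)))\<^sup>2"
    and "0 < \<delta>" and "\<delta> < 1"
  shows "measure M {\<omega> \<in> space M. \<forall>t\<in>{1..T}.
      (\<Sum>s\<in>{1..t}. hat_eta \<eta> \<gamma> gradf w1 g \<omega> s *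
          ((gradf (adaW w1 \<eta> \<gamma> g \<omega> s) - g s \<omega>) \<bullet> (adaW w1 \<eta> \<gamma> g \<omega> s - wstar)))
      \<le> 2 * max (Max ((\<lambda>s. norm (adaW w1 \<eta> \<gamma> g \<omega> s - wstar)) ` {1..t})) \<eta> *
          sqrt (A_fn t (\<delta> / log 2 (4 * real T)) *
                  (\<Sum>s\<in>{1..t}. (\<eta> / adaG \<gamma> g \<omega> (s - 1))\<^sup>2 *
                       (norm (gradf (adaW w1 \<eta> \<gamma> g \<omega> s) - g s \<omega>))\<^sup>2)
                + \<eta>\<^sup>2 * (\<sigma>0 / \<gamma> + \<sigma>1)\<^sup>2 * B_fn t (\<delta> / log 2 (4 * real T)))}
    \<ge> 1 - \<delta>"
proof -
  note P = assms(1) and sm = assms(3) and eta = assms(5) and gam = assms(6) and s0 = assms(7)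
    and s1 = assms(8) and dpos = assms(12) and dlt = assms(13)
  interpret prob_space M by (rule P)
  define w where "w s \<omega> = adaW w1 \<eta> \<gamma> g \<omega> s" for s \<omega>
  define G where "G s \<omega> = adaG \<gamma> g \<omega> s" for s \<omega>
  define \<xi> where "\<xi> s \<omega> = gradf (w s \<omega>) - g s \<omega>" for s \<omega>
  define he where "he s \<omega> = hat_eta \<eta> \<gamma> gradf w1 g \<omega> s" for s \<omega>
  define D where "D s \<omega> = max (Max ((\<lambda>s. norm (w s \<omega> - wstar)) ` {1..s})) \<eta>" for s \<omega>
  define Zr where "Zr s \<omega> = he s \<omega> * (\<xi> s \<omega> \<bullet> (w s \<omega> - wstar)) / D s \<omega>" for s \<omega>
  define c where "c = \<eta> * (\<sigma>0 / \<gamma> + \<sigma>1)"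
  define Z where "Z s \<omega> = max (-c) (min c (Zr s \<omega>))" for s \<omega>
  define Y where "Y t \<omega> = (\<Sum>s\<in>{1..t}. (\<eta> / G (s - 1) \<omega>)\<^sup>2 * (norm (\<xi> s \<omega>))\<^sup>2)" for t \<omega>
  define d' where "d' = \<delta> / log 2 (4 * real T)"
  define Tg where "Tg = {\<omega> \<in> space M. \<forall>t\<in>{1..T}.
     (\<Sum>s\<in>{1..t}. he s \<omega> * (\<xi> s \<omega> \<bullet> (w s \<omega> - wstar)))
        \<le> 2 * D t \<omega> * sqrt (A_fn t d' * Y t \<omega> + c\<^sup>2 * B_fn t d')}"
  have set_eq: "{\<omega> \<in> space M. \<forall>t\<in>{1..T}.
      (\<Sum>s\<in>{1..t}. hat_eta \<eta> \<gamma> gradf w1 g \<omega> s *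
          ((gradf (adaW w1 \<eta> \<gamma> g \<omega> s) - g s \<omega>) \<bullet> (adaW w1 \<eta> \<gamma> g \<omega> s - wstar)))
      \<le> 2 * max (Max ((\<lambda>s. norm (adaW w1 \<eta> \<gamma> g \<omega> s - wstar)) ` {1..t})) \<eta> *
          sqrt (A_fn t (\<delta> / log 2 (4 * real T)) *
                  (\<Sum>s\<in>{1..t}. (\<eta> / adaG \<gamma> g \<omega> (s - 1))\<^sup>2 *
                       (norm (gradf (adaW w1 \<eta> \<gamma> g \<omega> s) - g s \<omega>))\<^sup>2)
                + \<eta>\<^sup>2 * (\<sigma>0 / \<gamma> + \<sigma>1)\<^sup>2 * B_fn t (\<delta> / log 2 (4 * real T)))} = Tg"
    unfolding Tg_def w_def G_def \<xi>_def he_def D_def Y_def c_def d'_def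
    by (simp add: power_mult_distrib)
  have gm: "gradf \<in> borel_measurable borel" by (rule gradf_cont[OF sm])
  have sub: "subalgebra M (past M g r)" for r by (rule past_subalg[OF meas])
  have wP: "w s \<in> borel_measurable (past M g r)" if "s \<le> r" for s r
    unfolding w_def by (rule adaW_meas_past[OF meas that])
  have GP: "G s \<in> borel_measurable (past M g r)" if "s < r" for s r
    unfolding G_def by (rule adaG_meas_past[OF meas that])
  have gP: "g s \<in> borel_measurable (past M g r)" if "1 \<le> s" "s < r" for s r
    by (rule g_meas_past[OF meas that])
  have gwP: "(\<lambda>\<omega>. gradf (w s \<omega>)) \<in> borel_measurable (past M g r)" if "s \<le> r" for s r
    using measurable_compose[OF wP[OF that] gm] by (simp add: comp_def)
  have heP: "he s \<in> borel_measurable (past M g r)" if "1 \<le> s" "s \<le> r" for s r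
  proof -
    have [measurable]: "G (s - 1) \<in> borel_measurable (past M g r)" using that by (intro GP) auto
    have [measurable]: "(\<lambda>\<omega>. gradf (w s \<omega>)) \<in> borel_measurable (past M g r)" using that by (intro gwP) auto
    have "he s = (\<lambda>\<omega>. \<eta> / sqrt ((G (s - 1) \<omega>)\<^sup>2 + (norm (gradf (w s \<omega>)))\<^sup>2))"
      by (auto simp: he_def hat_eta_def G_def w_def)
    also have "\<dots> \<in> borel_measurable (past M g r)" by measurable
    finally show ?thesis .
  qed
  have DP: "D s \<in> borel_measurable (past M g r)" if "s \<le> r" for s r
  proof -
    have "(\<lambda>\<omega>. Max ((\<lambda>q. norm (w q \<omega> - wstar)) ` {1..s})) \<in> borel_measurable (past M g r)"
    proof (rule borel_measurable_Max)
      fix q assume "q \<in> {1..s}"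
      then have [measurable]: "w q \<in> borel_measurable (past M g r)" using that by (intro wP) auto
      show "(\<lambda>\<omega>. norm (w q \<omega> - wstar)) \<in> borel_measurable (past M g r)" by measurable
    qed simp
    then show ?thesis unfolding D_def by measurable
  qed
  have xiP: "\<xi> s \<in> borel_measurable (past M g r)" if "1 \<le> s" "s < r" for s r
  proof -
    have [measurable]: "(\<lambda>\<omega>. gradf (w s \<omega>)) \<in> borel_measurable (past M g r)" using that by (intro gwP) auto
    have [measurable]: "g s \<in> borel_measurable (past M g r)" using that by (intro gP) auto
    show ?thesis unfolding \<xi>_def by measurable
  qed
  have ZrP: "Zr s \<in> borel_measurable (past M g r)" if "1 \<le> s" "s < r" for s r
  proof -
    have [measurable]: "\<xi> s \<in> borel_measurable (past M g r)" using that by (intro xiP) auto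
    have [measurable]: "he s \<in> borel_measurable (past M g r)" using that by (intro heP) auto
    have [measurable]: "D s \<in> borel_measurable (past M g r)" using that by (intro DP) auto
    have [measurable]: "w s \<in> borel_measurable (past M g r)" using that by (intro wP) auto
    show ?thesis unfolding Zr_def by measurable
  qed
  have ZP: "Z s \<in> borel_measurable (past M g r)" if "1 \<le> s" "s < r" for s r
  proof -
    have [measurable]: "Zr s \<in> borel_measurable (past M g r)" using that by (intro ZrP) auto
    show ?thesis unfolding Z_def by measurable
  qed
  have toM: "f \<in> borel_measurable M" if "f \<in> borel_measurable (past M g r)" for f :: "'w \<Rightarrow> real" and r
    by (rule measurable_from_subalg[OF sub that])
  have toMv: "f \<in> borel_measurable M" if "f \<in> borel_measurable (past M g r)" for f :: "'w \<Rightarrow> 'a" and r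
    by (rule measurable_from_subalg[OF sub that])
  have Gpos: "\<gamma> \<le> G s \<omega>" for s \<omega> unfolding G_def by (rule adaG_pos[OF gam])
  have Dge: "\<eta> \<le> D s \<omega>" for s \<omega> unfolding D_def by simp
  have Dpos: "0 < D s \<omega>" for s \<omega> using Dge[of s \<omega>] eta by linarith
  have Dw: "norm (w s \<omega> - wstar) \<le> D s \<omega>" if "1 \<le> s" for s \<omega>
  proof -
    have "norm (w s \<omega> - wstar) \<le> Max ((\<lambda>s. norm (w s \<omega> - wstar)) ` {1..s})"
      using that by (intro Max_ge) auto
    then show ?thesis unfolding D_def by linarith
  qed
  have Dmono: "D s \<omega> \<le> D (Suc s) \<omega>" if "1 \<le> s" for s \<omega>
  proof -
    have "Max ((\<lambda>s. norm (w s \<omega> - wstar)) ` {1..s}) \<le> Max ((\<lambda>s. norm (w s \<omega> - wstar)) ` {1..Suc s})"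
      using that by (intro Max_mono image_mono) auto
    then show ?thesis unfolding D_def by linarith
  qed
  have he_eq: "he s \<omega> = \<eta> / sqrt ((G (s - 1) \<omega>)\<^sup>2 + (norm (gradf (w s \<omega>)))\<^sup>2)" for s \<omega>
    by (simp add: he_def hat_eta_def G_def w_def)
  have he_nn: "0 \<le> he s \<omega>" for s \<omega> unfolding he_eq using eta by simp
  have he_le: "he s \<omega> \<le> \<eta> / G (s - 1) \<omega>" for s \<omega>
  proof -
    have g0: "0 < G (s - 1) \<omega>" using Gpos[of "s - 1" \<omega>] gam by linarith
    have "G (s - 1) \<omega> \<le> sqrt ((G (s - 1) \<omega>)\<^sup>2 + (norm (gradf (w s \<omega>)))\<^sup>2)"
      using real_sqrt_le_mono[of "(G (s - 1) \<omega>)\<^sup>2" "(G (s - 1) \<omega>)\<^sup>2 + (norm (gradf (w s \<omega>)))\<^sup>2"] g0 by simp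
    moreover have "0 < sqrt ((G (s - 1) \<omega>)\<^sup>2 + (norm (gradf (w s \<omega>)))\<^sup>2)"
      using g0 by (intro real_sqrt_gt_zero add_pos_nonneg) auto
    ultimately show ?thesis unfolding he_eq using eta g0 by (intro divide_left_mono mult_pos_pos) auto
  qed
  have he_le2: "he s \<omega> \<le> \<eta> / \<gamma>" for s \<omega>
  proof -
    have "\<eta> / G (s - 1) \<omega> \<le> \<eta> / \<gamma>" using Gpos[of "s - 1" \<omega>] gam eta by (intro divide_left_mono) auto
    then show ?thesis using he_le[of s \<omega>] by linarith
  qed
  have Zr_abs: "\<bar>Zr s \<omega>\<bar> \<le> he s \<omega> * norm (\<xi> s \<omega>)" if "1 \<le> s" for s \<omega>
  proof -
    have "\<bar>\<xi> s \<omega> \<bullet> (w s \<omega> - wstar)\<bar> \<le> norm (\<xi> s \<omega>) * norm (w s \<omega> - wstar)"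
      by (rule Cauchy_Schwarz_ineq2)
    also have "\<dots> \<le> norm (\<xi> s \<omega>) * D s \<omega>" using Dw[OF that] by (intro mult_left_mono) auto
    finally have 1: "\<bar>\<xi> s \<omega> \<bullet> (w s \<omega> - wstar)\<bar> / D s \<omega> \<le> norm (\<xi> s \<omega>)"
      using Dpos[of s \<omega>] by (simp add: divide_le_eq)
    have "\<bar>Zr s \<omega>\<bar> = he s \<omega> * (\<bar>\<xi> s \<omega> \<bullet> (w s \<omega> - wstar)\<bar> / D s \<omega>)"
      unfolding Zr_def using he_nn[of s \<omega>] Dpos[of s \<omega>] by (simp add: abs_mult)
    also have "\<dots> \<le> he s \<omega> * norm (\<xi> s \<omega>)" using 1 he_nn by (intro mult_left_mono) auto
    finally show ?thesis .
  qed
  define NB where "NB s \<omega> \<longleftrightarrow> (norm (\<xi> s \<omega>))\<^sup>2 \<le> \<sigma>0\<^sup>2 + \<sigma>1\<^sup>2 * (norm (gradf (w s \<omega>)))\<^sup>2" for s \<omega>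
  have Zr_c: "\<bar>Zr s \<omega>\<bar> \<le> c" if "1 \<le> s" "NB s \<omega>" for s \<omega>
  proof -
    have "he s \<omega> * norm (\<xi> s \<omega>) \<le> c" unfolding he_eq c_def
      using that(2) unfolding NB_def
      by (intro he_bound[OF eta gam Gpos]) (use s0 s1 in auto)
    then show ?thesis using Zr_abs[OF that(1), of \<omega>] by linarith
  qed
  have c0: "0 \<le> c" unfolding c_def using eta gam s0 s1 by simp
  have Z_eq: "Z s \<omega> = Zr s \<omega>" if "1 \<le> s" "NB s \<omega>" for s \<omega>
    using Zr_c[OF that] unfolding Z_def by (simp add: abs_le_iff)
  have Z_bd: "\<bar>Z s \<omega>\<bar> \<le> c" for s \<omega> unfolding Z_def using c0 by auto
  have Zr_sq: "(Zr s \<omega>)\<^sup>2 \<le> (\<eta> / G (s - 1) \<omega>)\<^sup>2 * (norm (\<xi> s \<omega>))\<^sup>2" if "1 \<le> s" for s \<omega>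
  proof -
    have "\<bar>Zr s \<omega>\<bar> \<le> \<eta> / G (s - 1) \<omega> * norm (\<xi> s \<omega>)"
      using Zr_abs[OF that, of \<omega>] he_le[of s \<omega>] by (meson mult_right_mono norm_ge_zero order_trans)
    then have "\<bar>Zr s \<omega>\<bar>\<^sup>2 \<le> (\<eta> / G (s - 1) \<omega> * norm (\<xi> s \<omega>))\<^sup>2" by (intro power_mono) auto
    then show ?thesis by (simp only: power_mult_distrib power2_abs)
  qed
  have AEnb: "AE \<omega> in M. \<forall>s\<in>{1..T}. NB s \<omega>"
  proof (rule AE_finite_allI)
    fix s assume "s \<in> {1..T}"
    from noise[OF this] show "AE \<omega> in M. NB s \<omega>"
      by eventually_elim (simp add: NB_def \<xi>_def w_def norm_minus_commute)
  qed simp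
  have sfs: "sigma_finite_subalgebra M (past M g r)" for r
  proof (rule finite_measure_subalgebra_is_sigma_finite)
    show "finite_measure_subalgebra M (past M g r)"
      unfolding finite_measure_subalgebra_def finite_measure_subalgebra_axioms_def
      using sub finite_measure_axioms by (simp add: finite_measure_def)
  qed
  have gradb: "norm (gradf (w s \<omega>)) \<le> norm (gradf w1) + \<bar>\<beta>\<bar> * (real s * \<eta>)" for s \<omega>
  proof -
    have "norm (gradf (w s \<omega>) - gradf w1) \<le> \<beta> * norm (w s \<omega> - w1)" using sm unfolding smooth_def by blast
    also have "\<dots> \<le> \<bar>\<beta>\<bar> * norm (w s \<omega> - w1)" by (intro mult_right_mono) auto
    also have "\<dots> \<le> \<bar>\<beta>\<bar> * (real s * \<eta>)" unfolding w_def by (intro mult_left_mono adaW_step eta gam) auto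
    finally show ?thesis using norm_triangle_ineq2[of "gradf (w s \<omega>)" "gradf w1"] by linarith
  qed
  have mart: "(\<integral>\<omega>. H \<omega> * Z r \<omega> \<partial>M) = 0"
    if r: "r \<in> {1..T}" and Hm: "H \<in> borel_measurable (past M g r)" and HB: "\<And>\<omega>. \<bar>H \<omega>\<bar> \<le> B" for r H B
  proof -
    have r1: "1 \<le> r" using r by simp
    have HmM: "H \<in> borel_measurable M" by (rule toM[OF Hm])
    have ZrM: "Zr r \<in> borel_measurable M" by (rule toM[OF ZrP[OF r1, of "Suc r"]]) simp
    have ZM: "Z r \<in> borel_measurable M" by (rule toM[OF ZP[OF r1, of "Suc r"]]) simp
    have AEZ: "AE \<omega> in M. Z r \<omega> = Zr r \<omega>" using AEnb by eventually_elim (use r Z_eq in auto)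
    have "(\<integral>\<omega>. H \<omega> * Z r \<omega> \<partial>M) = (\<integral>\<omega>. H \<omega> * Zr r \<omega> \<partial>M)"
      using AEZ HmM ZM ZrM by (intro integral_cong_AE) auto
    define Pf where "Pf i \<omega> = H \<omega> * he r \<omega> / D r \<omega> * ((w r \<omega> - wstar) \<bullet> i)" for i \<omega>
    have decomp: "H \<omega> * Zr r \<omega> = (\<Sum>i\<in>Basis. Pf i \<omega> * (gradf (w r \<omega>) \<bullet> i) - Pf i \<omega> * (g r \<omega> \<bullet> i))" for \<omega>
    proof -
      have "\<xi> r \<omega> \<bullet> (w r \<omega> - wstar) = (\<Sum>i\<in>Basis. (\<xi> r \<omega> \<bullet> i) * ((w r \<omega> - wstar) \<bullet> i))"
        by (rule euclidean_inner)
      then have "H \<omega> * Zr r \<omega> = (\<Sum>i\<in>Basis. Pf i \<omega> * (\<xi> r \<omega> \<bullet> i))"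
        unfolding Zr_def Pf_def by (simp add: sum_distrib_left sum_divide_distrib mult_ac)
      also have "\<dots> = (\<Sum>i\<in>Basis. Pf i \<omega> * (gradf (w r \<omega>) \<bullet> i) - Pf i \<omega> * (g r \<omega> \<bullet> i))"
        unfolding \<xi>_def by (simp add: inner_diff_left right_diff_distrib)
      finally show ?thesis .
    qed
    have B0: "0 \<le> B" using HB[of undefined] by linarith
    have Pfb: "\<bar>Pf i \<omega>\<bar> \<le> B * (\<eta> / \<gamma>)" if "i \<in> Basis" for i \<omega>
    proof -
      have "\<bar>(w r \<omega> - wstar) \<bullet> i\<bar> \<le> D r \<omega>"
        using Basis_le_norm[OF that, of "w r \<omega> - wstar"] Dw[OF r1, of \<omega>] by linarith
      then have q: "\<bar>(w r \<omega> - wstar) \<bullet> i\<bar> / D r \<omega> \<le> 1" using Dpos[of r \<omega>] by simp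
      have "\<bar>Pf i \<omega>\<bar> = \<bar>H \<omega>\<bar> * he r \<omega> * (\<bar>(w r \<omega> - wstar) \<bullet> i\<bar> / D r \<omega>)"
        unfolding Pf_def using he_nn[of r \<omega>] Dpos[of r \<omega>] by (simp add: abs_mult)
      also have "\<dots> \<le> B * (\<eta> / \<gamma>) * 1"
        using HB[of \<omega>] he_le2[of r \<omega>] he_nn[of r \<omega>] q B0 Dpos[of r \<omega>] eta gam
        by (intro mult_mono) auto
      finally show ?thesis by simp
    qed
    have PfP: "Pf i \<in> borel_measurable (past M g r)" for i
    proof -
      have [measurable]: "H \<in> borel_measurable (past M g r)" by (rule Hm)
      have [measurable]: "he r \<in> borel_measurable (past M g r)" using r1 by (intro heP) auto
      have [measurable]: "D r \<in> borel_measurable (past M g r)" by (intro DP) auto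
      have [measurable]: "w r \<in> borel_measurable (past M g r)" by (intro wP) auto
      show ?thesis unfolding Pf_def by measurable
    qed
    have PfM: "Pf i \<in> borel_measurable M" for i by (rule toM[OF PfP])
    define Bg where "Bg = norm (gradf w1) + \<bar>\<beta>\<bar> * (real r * \<eta>)"
    have grM: "(\<lambda>\<omega>. gradf (w r \<omega>)) \<in> borel_measurable M" by (rule toMv[OF gwP[of r r]]) simp
    have gM: "g r \<in> borel_measurable M" by (rule meas)
    have int1: "integrable M (\<lambda>\<omega>. Pf i \<omega> * (gradf (w r \<omega>) \<bullet> i))" if "i \<in> Basis" for i
    proof (rule integrable_const_bound[where B="B * (\<eta> / \<gamma>) * Bg"])
      show "AE \<omega> in M. norm (Pf i \<omega> * (gradf (w r \<omega>) \<bullet> i)) \<le> B * (\<eta> / \<gamma>) * Bg"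
      proof (rule AE_I2)
        fix \<omega>
        have "\<bar>gradf (w r \<omega>) \<bullet> i\<bar> \<le> Bg"
          using Basis_le_norm[OF that, of "gradf (w r \<omega>)"] gradb[of r \<omega>] unfolding Bg_def by linarith
        then have "\<bar>Pf i \<omega>\<bar> * \<bar>gradf (w r \<omega>) \<bullet> i\<bar> \<le> B * (\<eta> / \<gamma>) * Bg"
          using Pfb[OF that, of \<omega>] B0 eta gam by (intro mult_mono) auto
        then show "norm (Pf i \<omega> * (gradf (w r \<omega>) \<bullet> i)) \<le> B * (\<eta> / \<gamma>) * Bg"
          by (simp only: real_norm_def abs_mult)
      qed
      show "(\<lambda>\<omega>. Pf i \<omega> * (gradf (w r \<omega>) \<bullet> i)) \<in> borel_measurable M" using PfM grM by measurable
    qed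
    have int2: "integrable M (\<lambda>\<omega>. Pf i \<omega> * (g r \<omega> \<bullet> i))" if "i \<in> Basis" for i
    proof (rule integrable_const_bound[where B="B * (\<eta> / \<gamma>) * (Bg + (\<sigma>0 + \<sigma>1 * Bg))"])
      show "AE \<omega> in M. norm (Pf i \<omega> * (g r \<omega> \<bullet> i)) \<le> B * (\<eta> / \<gamma>) * (Bg + (\<sigma>0 + \<sigma>1 * Bg))"
        using AEnb
      proof eventually_elim
        case (elim \<omega>)
        then have nb: "NB r \<omega>" using r by auto
        have a: "norm (gradf (w r \<omega>)) \<le> Bg" using gradb[of r \<omega>] unfolding Bg_def by simp
        have "norm (\<xi> r \<omega>) \<le> \<sigma>0 + \<sigma>1 * norm (gradf (w r \<omega>))"
          using noise_lin[of "norm (\<xi> r \<omega>)" "norm (gradf (w r \<omega>))" \<sigma>0 \<sigma>1] nb s0 s1 unfolding NB_def by simp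
        also have "\<dots> \<le> \<sigma>0 + \<sigma>1 * Bg" using a s1 by (simp add: mult_left_mono)
        finally have xb: "norm (\<xi> r \<omega>) \<le> \<sigma>0 + \<sigma>1 * Bg" .
        have "norm (g r \<omega>) \<le> norm (gradf (w r \<omega>)) + norm (\<xi> r \<omega>)"
          unfolding \<xi>_def using norm_triangle_ineq4[of "gradf (w r \<omega>)" "gradf (w r \<omega>) - g r \<omega>"] by simp
        then have "\<bar>g r \<omega> \<bullet> i\<bar> \<le> Bg + (\<sigma>0 + \<sigma>1 * Bg)"
          using Basis_le_norm[OF that, of "g r \<omega>"] a xb by linarith
        then have "\<bar>Pf i \<omega>\<bar> * \<bar>g r \<omega> \<bullet> i\<bar> \<le> B * (\<eta> / \<gamma>) * (Bg + (\<sigma>0 + \<sigma>1 * Bg))"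
          using Pfb[OF that, of \<omega>] B0 eta gam by (intro mult_mono) auto
        then show ?case by (simp only: real_norm_def abs_mult)
      qed
      show "(\<lambda>\<omega>. Pf i \<omega> * (g r \<omega> \<bullet> i)) \<in> borel_measurable M" using PfM gM by measurable
    qed
    have eqi: "(\<integral>\<omega>. Pf i \<omega> * (g r \<omega> \<bullet> i) \<partial>M) = (\<integral>\<omega>. Pf i \<omega> * (gradf (w r \<omega>) \<bullet> i) \<partial>M)"
      if "i \<in> Basis" for i
    proof -
      have giM: "(\<lambda>\<omega>. g r \<omega> \<bullet> i) \<in> borel_measurable M" using gM by measurable
      have "(\<integral>\<omega>. Pf i \<omega> * (g r \<omega> \<bullet> i) \<partial>M)
          = (\<integral>\<omega>. Pf i \<omega> * real_cond_exp M (past M g r) (\<lambda>\<omega>. g r \<omega> \<bullet> i) \<omega> \<partial>M)"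
        by (rule sigma_finite_subalgebra.real_cond_exp_intg(2)[OF sfs int2[OF that] PfP giM, symmetric])
      also have "\<dots> = (\<integral>\<omega>. Pf i \<omega> * (gradf (w r \<omega>) \<bullet> i) \<partial>M)"
      proof (rule integral_cong_AE)
        have "real_cond_exp M (past M g r) (\<lambda>\<omega>. g r \<omega> \<bullet> i) \<in> borel_measurable M"
          by (rule borel_measurable_cond_exp2)
        then show "(\<lambda>\<omega>. Pf i \<omega> * real_cond_exp M (past M g r) (\<lambda>\<omega>. g r \<omega> \<bullet> i) \<omega>) \<in> borel_measurable M"
          using PfM by measurable
        show "(\<lambda>\<omega>. Pf i \<omega> * (gradf (w r \<omega>) \<bullet> i)) \<in> borel_measurable M" using PfM grM by measurable
        show "AE \<omega> in M. Pf i \<omega> * real_cond_exp M (past M g r) (\<lambda>\<omega>. g r \<omega> \<bullet> i) \<omega> = Pf i \<omega> * (gradf (w r \<omega>) \<bullet> i)"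
          using unbiased[OF r, of i] by eventually_elim (simp add: w_def)
      qed
      finally show ?thesis .
    qed
    have "(\<integral>\<omega>. H \<omega> * Zr r \<omega> \<partial>M) = (\<integral>\<omega>. (\<Sum>i\<in>Basis. Pf i \<omega> * (gradf (w r \<omega>) \<bullet> i) - Pf i \<omega> * (g r \<omega> \<bullet> i)) \<partial>M)"
      by (simp add: decomp)
    also have "\<dots> = (\<Sum>i\<in>Basis. (\<integral>\<omega>. Pf i \<omega> * (gradf (w r \<omega>) \<bullet> i) - Pf i \<omega> * (g r \<omega> \<bullet> i) \<partial>M))"
      by (rule Bochner_Integration.integral_sum) (use int1 int2 in auto)
    also have "\<dots> = (\<Sum>i\<in>Basis. (\<integral>\<omega>. Pf i \<omega> * (gradf (w r \<omega>) \<bullet> i) \<partial>M) - (\<integral>\<omega>. Pf i \<omega> * (g r \<omega> \<bullet> i) \<partial>M))"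
      using int1 int2 by (intro sum.cong refl integral_diff) auto
    also have "\<dots> = 0" using eqi by simp
    finally show ?thesis using \<open>(\<integral>\<omega>. H \<omega> * Z r \<omega> \<partial>M) = (\<integral>\<omega>. H \<omega> * Zr r \<omega> \<partial>M)\<close> by simp
  qed
  have ZM: "Z r \<in> borel_measurable M" if "1 \<le> r" for r by (rule toM[OF ZP[OF that, of "Suc r"]]) simp
  have ZrM: "Zr r \<in> borel_measurable M" if "1 \<le> r" for r by (rule toM[OF ZrP[OF that, of "Suc r"]]) simp
  have sumZM: "(\<lambda>\<omega>. \<Sum>r\<in>{1..s}. Z r \<omega>) \<in> borel_measurable M" for s
    by (rule borel_measurable_sum) (use ZM in auto)
  have sumZ2M: "(\<lambda>\<omega>. \<Sum>r\<in>{1..s}. (Z r \<omega>)\<^sup>2) \<in> borel_measurable M" for s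
  proof (rule borel_measurable_sum)
    fix r assume "r \<in> {1..s}"
    then have [measurable]: "Z r \<in> borel_measurable M" using ZM by auto
    show "(\<lambda>\<omega>. (Z r \<omega>)\<^sup>2) \<in> borel_measurable M" by measurable
  qed
  have sumZmM: "(\<lambda>\<omega>. \<Sum>r\<in>{1..s}. - Z r \<omega>) \<in> borel_measurable M" for s
    using sumZM[of s] by (simp add: sum_negf)
  have sumZm2M: "(\<lambda>\<omega>. \<Sum>r\<in>{1..s}. (- Z r \<omega>)\<^sup>2) \<in> borel_measurable M" for s
    using sumZ2M[of s] by simp
  have TgM: "Tg \<in> sets M"
    unfolding Tg_def
  proof (rule all_set_meas)
    fix t assume "t \<in> {1..T}"
    show "(\<lambda>\<omega>. \<Sum>s\<in>{1..t}. he s \<omega> * (\<xi> s \<omega> \<bullet> (w s \<omega> - wstar))) \<in> borel_measurable M"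
    proof (rule borel_measurable_sum)
      fix s assume "s \<in> {1..t}"
      then have s1: "1 \<le> s" by simp
      have [measurable]: "he s \<in> borel_measurable M" using heP[OF s1 order.refl] by (rule toM)
      have [measurable]: "\<xi> s \<in> borel_measurable M" using xiP[OF s1, of "Suc s"] by (intro toMv) auto
      have [measurable]: "w s \<in> borel_measurable M" using wP[of s s] by (intro toMv) auto
      show "(\<lambda>\<omega>. he s \<omega> * (\<xi> s \<omega> \<bullet> (w s \<omega> - wstar))) \<in> borel_measurable M" by measurable
    qed
    have [measurable]: "D t \<in> borel_measurable M" using DP[of t t] by (intro toM) auto
    have [measurable]: "Y t \<in> borel_measurable M"
      unfolding Y_def
    proof (rule borel_measurable_sum)
      fix s assume "s \<in> {1..t}"
      then have s1: "1 \<le> s" by simp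
      have [measurable]: "\<xi> s \<in> borel_measurable M" using xiP[OF s1, of "Suc s"] by (intro toMv) auto
      have [measurable]: "G (s - 1) \<in> borel_measurable M" using GP[of "s - 1" s] s1 by (intro toM) auto
      show "(\<lambda>\<omega>. (\<eta> / G (s - 1) \<omega>)\<^sup>2 * (norm (\<xi> s \<omega>))\<^sup>2) \<in> borel_measurable M" by measurable
    qed
    show "(\<lambda>\<omega>. 2 * D t \<omega> * sqrt (A_fn t d' * Y t \<omega> + c\<^sup>2 * B_fn t d')) \<in> borel_measurable M"
      by measurable
  qed simp
  show ?thesis
  proof (cases "T = 0")
    case True
    then have "Tg = space M" by (auto simp: Tg_def)
    then show ?thesis unfolding set_eq using prob_space dpos by simp
  next
    case False
    then have T1: "1 \<le> T" by simp
    define Kset where "Kset = {k::nat. 4^k < 4 * real T}"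
    define L where "L = ln (60 * log 2 (4 * real T) / \<delta>)"
    define lam where "lam k = 1 / (2*c*2^k)" for k :: nat
    define Ep where "Ep k = {\<omega>\<in>space M. \<exists>s\<in>{1..T}. L \<le> lam k * (\<Sum>r\<in>{1..s}. Z r \<omega>) - (lam k)\<^sup>2 * (\<Sum>r\<in>{1..s}. (Z r \<omega>)\<^sup>2)}" for k
    define Em where "Em k = {\<omega>\<in>space M. \<exists>s\<in>{1..T}. L \<le> lam k * (\<Sum>r\<in>{1..s}. - Z r \<omega>) - (lam k)\<^sup>2 * (\<Sum>r\<in>{1..s}. (- Z r \<omega>)\<^sup>2)}" for k
    define Bad where "Bad = (if 0 < c then (\<Union>k\<in>Kset. Ep k \<union> Em k) else {})"
    have Lge: "1 \<le> L" unfolding L_def by (rule L_ge1[OF T1 dpos dlt])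
    have lT: "2 \<le> log 2 (4 * real T)"
    proof -
      have "log 2 4 \<le> log 2 (4 * real T)" using T1 by simp
      moreover have "log 2 (4::real) = 2" by (simp add: log_def ln_realpow[of 2 2, simplified])
      ultimately show ?thesis by simp
    qed
    have lam_pos: "0 < lam k" if "0 < c" for k unfolding lam_def using that by simp
    have lam_c: "lam k * c \<le> 1/2" if "0 < c" for k
    proof -
      have "lam k * c = 1 / (2 * 2^k)" unfolding lam_def using that by simp
      also have "\<dots> \<le> 1/2" by (simp add: divide_le_eq)
      finally show ?thesis .
    qed
    have EpM: "Ep k \<in> sets M" for k unfolding Ep_def
      by (rule ex_set_meas) (use sumZM sumZ2M in measurable)
    have EmM: "Em k \<in> sets M" for k unfolding Em_def
      by (rule ex_set_meas) (use sumZmM sumZm2M in measurable)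
    have Ep_le: "measure M (Ep k) \<le> exp (-L)" if "0 < c" for k
      unfolding Ep_def
      by (rule core_ineq[OF P sub ZP Z_bd mart lam_pos[OF that] lam_c[OF that]]) auto
    have Em_le: "measure M (Em k) \<le> exp (-L)" if "0 < c" for k
      unfolding Em_def
    proof (rule core_ineq[OF P sub _ _ _ lam_pos[OF that] lam_c[OF that]])
      show "(\<lambda>\<omega>. - Z r \<omega>) \<in> borel_measurable (past M g s)" if "1 \<le> r" "r < s" for r s
        using ZP[OF that] by measurable
      show "\<bar>- Z r \<omega>\<bar> \<le> c" for r \<omega> using Z_bd by simp
      show "(\<integral>\<omega>. H \<omega> * - Z r \<omega> \<partial>M) = 0"
        if "r \<in> {1..T}" "H \<in> borel_measurable (past M g r)" "\<And>\<omega>. \<bar>H \<omega>\<bar> \<le> B" for r H B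
        using mart[OF that] by simp
    qed
    have BadM: "Bad \<in> sets M" unfolding Bad_def using EpM EmM card_Kset(1)[OF T1]
      by (auto simp: Kset_def)
    have fin: "finite Kset" unfolding Kset_def by (rule card_Kset(1)[OF T1])
    have cardK: "real (card Kset) \<le> 2 * log 2 (4 * real T)" unfolding Kset_def by (rule card_Kset(2)[OF T1])
    have expL: "exp (-L) = \<delta> / (60 * log 2 (4 * real T))"
    proof -
      have "0 < 60 * log 2 (4 * real T) / \<delta>" using lT dpos by simp
      then show ?thesis unfolding L_def by (simp add: exp_minus)
    qed
    have Bad_le: "measure M Bad \<le> \<delta>"
    proof (cases "0 < c")
      case True
      have "measure M Bad = measure M (\<Union>k\<in>Kset. Ep k \<union> Em k)" using True by (simp add: Bad_def)
      also have "\<dots> \<le> (\<Sum>k\<in>Kset. measure M (Ep k \<union> Em k))"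
        using fin EpM EmM by (intro finite_measure_subadditive_finite) auto
      also have "\<dots> \<le> (\<Sum>k\<in>Kset. 2 * exp (-L))"
      proof (rule sum_mono)
        fix k
        have "measure M (Ep k \<union> Em k) \<le> measure M (Ep k) + measure M (Em k)"
          using EpM EmM by (rule measure_Un_le)
        then show "measure M (Ep k \<union> Em k) \<le> 2 * exp (-L)" using Ep_le[OF True, of k] Em_le[OF True, of k] by simp
      qed
      also have "\<dots> = real (card Kset) * (2 * exp (-L))" by simp
      also have "\<dots> \<le> (2 * log 2 (4 * real T)) * (2 * exp (-L))"
        using cardK by (intro mult_right_mono) auto
      also have "\<dots> = \<delta> / 15" unfolding expL using lT by (simp add: field_simps)
      also have "\<dots> \<le> \<delta>" using dpos by simp
      finally show ?thesis .
    next
      case False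
      then show ?thesis using dpos by (simp add: Bad_def)
    qed
    have key: "\<omega> \<in> Tg" if \<omega>: "\<omega> \<in> space M" and nb: "\<forall>s\<in>{1..T}. NB s \<omega>" and nbad: "\<omega> \<notin> Bad" for \<omega>
    proof -
      have "(\<Sum>s\<in>{1..t}. he s \<omega> * (\<xi> s \<omega> \<bullet> (w s \<omega> - wstar))) \<le> 2 * D t \<omega> * sqrt (A_fn t d' * Y t \<omega> + c\<^sup>2 * B_fn t d')"
        if t: "t \<in> {1..T}" for t
      proof -
        define R where "R = sqrt (A_fn t d' * Y t \<omega> + c\<^sup>2 * B_fn t d')"
        define l where "l = log 2 (60 * log 2 (6 * real t) / d')"
        have Ll: "L \<le> l" unfolding L_def l_def d'_def using t dpos dlt T1 by (intro L_le) auto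
        have Y0: "0 \<le> Y t \<omega>" unfolding Y_def by (intro sum_nonneg) auto
        have Rnn: "0 \<le> A_fn t d' * Y t \<omega> + c\<^sup>2 * B_fn t d'"
          unfolding A_fn_def B_fn_def l_def[symmetric] using Ll Lge Y0 by simp
        have bd: "\<bar>\<Sum>r\<in>{1..s}. Zr r \<omega>\<bar> \<le> R" if s: "s \<in> {1..t}" for s
        proof (cases "0 < c")
          case False
          then have c00: "c = 0" using c0 by simp
          have "Zr r \<omega> = 0" if "r \<in> {1..s}" for r
            using Zr_c[of r \<omega>] nb that s t c00 by auto
          then have "(\<Sum>r\<in>{1..s}. Zr r \<omega>) = 0" by simp
          then show ?thesis unfolding R_def using Rnn by simp
        next
          case True
          define W where "W = min (Y t \<omega>) (real T * c\<^sup>2)"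
          have W0: "0 \<le> W" unfolding W_def using Y0 by simp
          have WT: "W \<le> real T * c\<^sup>2" unfolding W_def by simp
          have WY: "W \<le> Y t \<omega>" unfolding W_def by simp
          obtain k where k: "4^k < 4 * real T"
            and kb: "L * (2*c*2^k) + W / (2*c*2^k) \<le> max (4*c*L) (3 * sqrt (L*W))"
            using grid_choice[OF Lge True W0 WT T1] by blast
          have kK: "k \<in> Kset" unfolding Kset_def using k by simp
          have nEp: "\<omega> \<notin> Ep k" and nEm: "\<omega> \<notin> Em k" using nbad kK True by (auto simp: Bad_def)
          have sT: "s \<in> {1..T}" using s t by auto
          have ZZ: "Z r \<omega> = Zr r \<omega>" if "r \<in> {1..s}" for r
            using Z_eq[of r \<omega>] nb that s t by auto
          define S where "S = (\<Sum>r\<in>{1..s}. Zr r \<omega>)"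
          define V where "V = (\<Sum>r\<in>{1..s}. (Zr r \<omega>)\<^sup>2)"
          have VW: "V \<le> W"
          proof -
            have "V \<le> (\<Sum>r\<in>{1..s}. (\<eta> / G (r - 1) \<omega>)\<^sup>2 * (norm (\<xi> r \<omega>))\<^sup>2)"
              unfolding V_def by (intro sum_mono Zr_sq) auto
            also have "\<dots> \<le> Y t \<omega>" unfolding Y_def using s by (intro sum_mono2) auto
            finally have 1: "V \<le> Y t \<omega>" .
            have "V \<le> (\<Sum>r\<in>{1..s}. c\<^sup>2)" unfolding V_def
            proof (intro sum_mono)
              fix r assume r: "r \<in> {1..s}"
              have "\<bar>Zr r \<omega>\<bar> \<le> c" using Zr_c[of r \<omega>] nb r s t by auto
              then have "\<bar>Zr r \<omega>\<bar>\<^sup>2 \<le> c\<^sup>2" by (intro power_mono) auto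
              then show "(Zr r \<omega>)\<^sup>2 \<le> c\<^sup>2" by simp
            qed
            also have "\<dots> = real s * c\<^sup>2" by simp
            also have "\<dots> \<le> real T * c\<^sup>2" using s t by (intro mult_right_mono) auto
            finally have 2: "V \<le> real T * c\<^sup>2" .
            show ?thesis using 1 2 unfolding W_def by simp
          qed
          have lp: "0 < lam k" by (rule lam_pos[OF True])
          have h1: "lam k * S - (lam k)\<^sup>2 * V < L"
          proof -
            have "\<not> (L \<le> lam k * (\<Sum>r\<in>{1..s}. Z r \<omega>) - (lam k)\<^sup>2 * (\<Sum>r\<in>{1..s}. (Z r \<omega>)\<^sup>2))"
              using nEp \<omega> sT unfolding Ep_def by blast
            then show ?thesis unfolding S_def V_def using ZZ by simp
          qed
          have h2: "lam k * (- S) - (lam k)\<^sup>2 * V < L"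
          proof -
            have "\<not> (L \<le> lam k * (\<Sum>r\<in>{1..s}. - Z r \<omega>) - (lam k)\<^sup>2 * (\<Sum>r\<in>{1..s}. (- Z r \<omega>)\<^sup>2))"
              using nEm \<omega> sT unfolding Em_def by blast
            then show ?thesis unfolding S_def V_def using ZZ by (simp add: sum_negf)
          qed
          have eqL: "lam k * (L / lam k + lam k * V) = L + (lam k)\<^sup>2 * V"
            using lp by (simp add: field_simps power2_eq_square)
          have "lam k * \<bar>S\<bar> \<le> lam k * (L / lam k + lam k * V)"
            using h1 h2 eqL by (cases "0 \<le> S") auto
          then have "\<bar>S\<bar> \<le> L / lam k + lam k * V" using lp by simp
          also have "\<dots> \<le> L / lam k + lam k * W" using VW lp by simp
          also have "\<dots> = L * (2*c*2^k) + W / (2*c*2^k)" unfolding lam_def by simp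
          also have "\<dots> \<le> max (4*c*L) (3 * sqrt (L*W))" by (rule kb)
          also have "\<dots> \<le> R"
          proof -
            have "max (4*c*L) (3 * sqrt (L*W)) \<le> sqrt (16*l * Y t \<omega> + c\<^sup>2 * (16 * l\<^sup>2))"
              by (rule final_real[OF True Lge Ll W0 WY])
            also have "\<dots> = R" unfolding R_def A_fn_def B_fn_def l_def by (simp add: mult_ac)
            finally show ?thesis .
          qed
          finally show ?thesis unfolding S_def .
        qed
        have "(\<Sum>s\<in>{1..t}. he s \<omega> * (\<xi> s \<omega> \<bullet> (w s \<omega> - wstar))) = (\<Sum>s\<in>{1..t}. D s \<omega> * Zr s \<omega>)"
          unfolding Zr_def
        proof (intro sum.cong refl)
          fix x assume "x \<in> {1..t}"
          have "D x \<omega> \<noteq> 0" using Dpos[of x \<omega>] by simp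
          then show "he x \<omega> * (\<xi> x \<omega> \<bullet> (w x \<omega> - wstar)) = D x \<omega> * (he x \<omega> * (\<xi> x \<omega> \<bullet> (w x \<omega> - wstar)) / D x \<omega>)"
            by simp
        qed
        also have "\<dots> \<le> 2 * D t \<omega> * R"
          by (rule abel[of t "\<lambda>s. D s \<omega>" "\<lambda>r. Zr r \<omega>" R]) (use Dmono Dpos t bd in \<open>auto simp: less_imp_le\<close>)
        finally show ?thesis unfolding R_def .
      qed
      then show ?thesis using \<omega> unfolding Tg_def by blast
    qed
    have "AE \<omega> in M. \<omega> \<in> space M - Tg \<longrightarrow> \<omega> \<in> Bad"
      using AEnb by eventually_elim (use key in blast)
    then have "measure M (space M - Tg) \<le> measure M Bad" using BadM by (rule finite_measure_mono_AE)
    also have "\<dots> \<le> \<delta>" by (rule Bad_le)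
    finally have "measure M (space M - Tg) \<le> \<delta>" .
    moreover have "measure M (space M - Tg) = 1 - measure M Tg" using prob_compl[OF TgM] by simp
    ultimately show ?thesis unfolding set_eq by simp
  qed
qed

end
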